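(* Let $(\mathfrak g,[\cdot,\cdot],\delta,n)$ be an almost NL bialgebra in which $n$ is a Nijenhuis operator, and assume ${}^tn$ is $\mathrm{ad}^*$-equivariant on $(\mathfrak g^*,[\cdot,\cdot]_{\mathfrak g^*})$, i.e. $\delta(\xi)(\eta_1,{}^tn\eta_2)=\delta(n\xi)(\eta_1,\eta_2)$ for all $\xi\in\mathfrak g$, $\eta_1,\eta_2\in\mathfrak g^*$. Then for all integers $i,j\ge0$: $[\cdot,\cdot]_{n^i}$ is a Lie bracket on $\mathfrak g$; $[\cdot,\cdot]^{({}^tn)^j}$ is a Lie bracket on $\mathfrak g^*$ with $\langle[\eta_1,\eta_2]^{({}^tn)^j},\xi\rangle=\delta_{({}^tn)^j}(\xi)(\eta_1,\eta_2)$; and $\delta_{({}^tn)^j}$ is a 1-cocycle for $[\cdot,\cdot]_{n^i}$. Thus $(\mathfrak g,[\cdot,\cdot]_{n^i},\delta^{n^i}_{({}^tn)^j})$, where $\delta^{n^i}_{({}^tn)^j}$ denotes $\delta_{({}^tn)^j}$ regarded as a cochain for $[\cdot,\cdot]_{n^i}$, is a Lie bialgebra for all $i,j\ge0$; moreover the brackets $[\cdot,\cdot]_{n^i}$ ($i\ge0$) are pairwise compatible, as are the brackets $[\cdot,\cdot]^{({}^tn)^j}$ ($j\ge0$) (any linear combination of two of them is again a Lie bracket).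
   Context: $(\mathfrak g,[\cdot,\cdot])$ is a finite-dimensional real Lie algebra; $\langle\mathrm{ad}^*_\xi\eta,\zeta\rangle=-\langle\eta,[\xi,\zeta]\rangle$. Elements of $\wedge^2\mathfrak g$ are skew-symmetric bilinear forms on $\mathfrak g^*$; for linear $\phi:\mathfrak g^*\to\mathfrak g^*$, $(\iota_\phi P)(\eta_1,\eta_2)=P(\phi\eta_1,\eta_2)+P(\eta_1,\phi\eta_2)$; $\mathrm{ad}^{(2)}_\xi=\iota_{\mathrm{ad}^*_\xi}$. A linear $\delta:\mathfrak g\to\wedge^2\mathfrak g$ is a 1-cocycle for $[\cdot,\cdot]$ if $\mathrm{ad}^{(2)}_{\xi_1}\delta(\xi_2)-\mathrm{ad}^{(2)}_{\xi_2}\delta(\xi_1)-\delta([\xi_1,\xi_2])=0$; a Lie bialgebra $(\mathfrak g,[\cdot,\cdot],\delta)$ has such $\delta$ with dual bracket $\langle[\eta_1,\eta_2]_{\mathfrak g^*},\xi\rangle=\delta(\xi)(\eta_1,\eta_2)$ a Lie bracket. ${}^tn$ is the transpose of $n$. For $m:\mathfrak g\to\mathfrak g$ linear, $[\xi_1,\xi_2]_m=[m\xi_1,\xi_2]+[\xi_1,m\xi_2]-m[\xi_1,\xi_2]$ (so $[\cdot,\cdot]_{n^0}=[\cdot,\cdot]$); $m$ is Nijenhuis if $m[\xi_1,\xi_2]_m=[m\xi_1,m\xi_2]$. For $j\ge0$, $[\eta_1,\eta_2]^{({}^tn)^j}=[({}^tn)^j\eta_1,\eta_2]_{\mathfrak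 g^*}+[\eta_1,({}^tn)^j\eta_2]_{\mathfrak g^*}-({}^tn)^j[\eta_1,\eta_2]_{\mathfrak g^*}$ and $\delta_{({}^tn)^j}(\xi)=\iota_{({}^tn)^j}\delta(\xi)-\delta(n^j\xi)$. A 1-cocycle for $[\cdot,\cdot]_{n^i}$ is a linear $\delta'$ with $\iota_{A^i_{\xi_1}}\delta'(\xi_2)-\iota_{A^i_{\xi_2}}\delta'(\xi_1)-\delta'([\xi_1,\xi_2]_{n^i})=0$, where $A^i_\xi=[({}^tn)^i,\mathrm{ad}^*_\xi]+\mathrm{ad}^*_{n^i\xi}$. An almost NL bialgebra $(\mathfrak g,[\cdot,\cdot],\delta,n)$ is a Lie bialgebra with linear $n$ such that $[\cdot,\cdot]_n$ is a Lie bracket, $\delta$ is a 1-cocycle for $[\cdot,\cdot]_n$, and $[\cdot,\cdot]^{{}^tn}$ is a Lie bracket on $\mathfrak g^*$. *)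

theory Defs
  imports "HOL-Analysis.Analysis"
begin

text \<open>Model: the finite-dimensional real vector space g is a type 'a::euclidean_space;
  its dual g* is identified with 'a via the inner product, the pairing
  being eta \<bullet> xi.  The transpose of a linear map n is adjoint n.
  Elements of wedge^2 g are skew-symmetric bilinear forms on g*, i.e.
  functions 'a \<Rightarrow> 'a \<Rightarrow> real.\<close>

definition lie_bracket :: "('a::real_vector \<Rightarrow> 'a \<Rightarrow> 'a) \<Rightarrow> bool" where
  "lie_bracket B \<longleftrightarrow> bilinear B \<and> (\<forall>x y. B x y = - B y x) \<and>
     (\<forall>x y z. B x (B y z) + B y (B z x) + B z (B x y) = 0)"

definition wedge2 :: "('a::real_vector \<Rightarrow> 'a \<Rightarrow> real) \<Rightarrow> bool" where
  "wedge2 P \<longleftrightarrow> bilinear P \<and> (\<forall>x y. P x y = - P y x)"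

text \<open>Coadjoint action: (coad B xi eta) \<bullet> zeta = - eta \<bullet> B xi zeta.\<close>
definition coad :: "('a::real_inner \<Rightarrow> 'a \<Rightarrow> 'a) \<Rightarrow> 'a \<Rightarrow> 'a \<Rightarrow> 'a" where
  "coad B xi = (\<lambda>eta. - adjoint (B xi) eta)"

definition iota :: "('a \<Rightarrow> 'a) \<Rightarrow> ('a \<Rightarrow> 'a \<Rightarrow> real) \<Rightarrow> 'a \<Rightarrow> 'a \<Rightarrow> real" where
  "iota phi P = (\<lambda>eta1 eta2. P (phi eta1) eta2 + P eta1 (phi eta2))"

text \<open>1-cocycle for the bracket B (with ad^(2)_xi = iota (coad B xi)).\<close>
definition cocycle :: "('a::real_inner \<Rightarrow> 'a \<Rightarrow> 'a) \<Rightarrow> ('a \<Rightarrow> 'a \<Rightarrow> 'a \<Rightarrow> real) \<Rightarrow> bool" where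
  "cocycle B d \<longleftrightarrow> (\<forall>xi1 xi2 eta1 eta2.
     iota (coad B xi1) (d xi2) eta1 eta2 - iota (coad B xi2) (d xi1) eta1 eta2
       - d (B xi1 xi2) eta1 eta2 = 0)"

text \<open>Dual bracket: (dual_br d eta1 eta2) \<bullet> xi = d xi eta1 eta2 (for d linear in xi).\<close>
definition dual_br :: "('a::euclidean_space \<Rightarrow> 'a \<Rightarrow> 'a \<Rightarrow> real) \<Rightarrow> 'a \<Rightarrow> 'a \<Rightarrow> 'a" where
  "dual_br d eta1 eta2 = (\<Sum>b\<in>Basis. d b eta1 eta2 *\<^sub>R b)"

definition lie_bialgebra :: "('a::euclidean_space \<Rightarrow> 'a \<Rightarrow> 'a) \<Rightarrow> ('a \<Rightarrow> 'a \<Rightarrow> 'a \<Rightarrow> real) \<Rightarrow> bool" where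
  "lie_bialgebra B d \<longleftrightarrow> lie_bracket B \<and> (\<forall>eta1 eta2. linear (\<lambda>xi. d xi eta1 eta2)) \<and>
     (\<forall>xi. wedge2 (d xi)) \<and> cocycle B d \<and> lie_bracket (dual_br d)"

text \<open>Deformed bracket [x,y]_m = [m x, y] + [x, m y] - m [x,y]
  (used both on g and, with the dual bracket, on g*).\<close>
definition br_m :: "('a::real_vector \<Rightarrow> 'a \<Rightarrow> 'a) \<Rightarrow> ('a \<Rightarrow> 'a) \<Rightarrow> 'a \<Rightarrow> 'a \<Rightarrow> 'a" where
  "br_m B m x y = B (m x) y + B x (m y) - m (B x y)"

definition nijenhuis :: "('a::real_vector \<Rightarrow> 'a \<Rightarrow> 'a) \<Rightarrow> ('a \<Rightarrow> 'a) \<Rightarrow> bool" where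
  "nijenhuis B m \<longleftrightarrow> (\<forall>x y. m (br_m B m x y) = B (m x) (m y))"

text \<open>delta_phi(xi) = iota phi (delta xi) - delta (m xi), with phi = (tn)^j, m = n^j.\<close>
definition delta_tw :: "('a \<Rightarrow> 'a \<Rightarrow> 'a \<Rightarrow> real) \<Rightarrow> ('a \<Rightarrow> 'a) \<Rightarrow> ('a \<Rightarrow> 'a) \<Rightarrow> 'a \<Rightarrow> 'a \<Rightarrow> 'a \<Rightarrow> real" where
  "delta_tw d phi m xi = (\<lambda>eta1 eta2. iota phi (d xi) eta1 eta2 - d (m xi) eta1 eta2)"

text \<open>A_xi = [t m, ad*_xi] + ad*_(m xi), with m = n^i and t m = (tn)^i.\<close>
definition A_op :: "('a::real_inner \<Rightarrow> 'a \<Rightarrow> 'a) \<Rightarrow> ('a \<Rightarrow> 'a) \<Rightarrow> ('a \<Rightarrow> 'a) \<Rightarrow> 'a \<Rightarrow> 'a \<Rightarrow> 'a" where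
  "A_op B m tm xi = (\<lambda>eta. tm (coad B xi eta) - coad B xi (tm eta) + coad B (m xi) eta)"

text \<open>1-cocycle for [.,.]_m (m = n^i, tm = (tn)^i).\<close>
definition cocycle_m :: "('a::real_inner \<Rightarrow> 'a \<Rightarrow> 'a) \<Rightarrow> ('a \<Rightarrow> 'a) \<Rightarrow> ('a \<Rightarrow> 'a) \<Rightarrow> ('a \<Rightarrow> 'a \<Rightarrow> 'a \<Rightarrow> real) \<Rightarrow> bool" where
  "cocycle_m B m tm d \<longleftrightarrow> (\<forall>xi1 xi2 eta1 eta2.
     iota (A_op B m tm xi1) (d xi2) eta1 eta2 - iota (A_op B m tm xi2) (d xi1) eta1 eta2
       - d (br_m B m xi1 xi2) eta1 eta2 = 0)"

definition almost_NL_bialgebra :: "('a::euclidean_space \<Rightarrow> 'a \<Rightarrow> 'a) \<Rightarrow> ('a \<Rightarrow> 'a \<Rightarrow> 'a \<Rightarrow> real) \<Rightarrow> ('a \<Rightarrow> 'a) \<Rightarrow> bool" where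
  "almost_NL_bialgebra B d n \<longleftrightarrow> lie_bialgebra B d \<and> linear n \<and> lie_bracket (br_m B n)
     \<and> cocycle_m B n (adjoint n) d \<and> lie_bracket (br_m (dual_br d) (adjoint n))"

end

theory Submission
  imports Defs
begin


definition tor :: "('a::real_vector \<Rightarrow> 'a \<Rightarrow> 'a) \<Rightarrow> ('a\<Rightarrow>'a) \<Rightarrow> ('a\<Rightarrow>'a) \<Rightarrow> 'a \<Rightarrow> 'a \<Rightarrow> 'a" where
 "tor \<nu> A B x y = \<nu> (A x) (B y) + \<nu> (B x) (A y) - A (br_m \<nu> B x y) - B (br_m \<nu> A x y)"

lemmas bil = bilinear_ladd bilinear_radd bilinear_lsub bilinear_rsub bilinear_lmul bilinear_rmul
   bilinear_lneg bilinear_rneg bilinear_lzero bilinear_rzero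
lemmas lin = linear_add linear_diff linear_scale linear_neg linear_0

lemma T1:
  assumes "bilinear \<nu>" "linear A" "linear B" "\<And>z. A (B z) = B (A z)"
  shows "br_m (br_m \<nu> A) B x y = br_m \<nu> (\<lambda>z. A (B z)) x y + tor \<nu> A B x y"
  using assms by (simp add: br_m_def tor_def bil lin algebra_simps)

lemma br_m_bilinear:
  assumes "bilinear \<nu>" "linear A"
  shows "bilinear (br_m \<nu> A)"
  using assms unfolding bilinear_def br_m_def
  by (auto intro!: linearI simp: lin bil[OF assms(1)] algebra_simps)

lemma tor_sym: "tor \<nu> A B x y = tor \<nu> B A x y"
  by (simp add: tor_def algebra_simps)

lemma tor_diag: "tor \<nu> N N x y = 2 *\<^sub>R (\<nu> (N x) (N y) - N (br_m \<nu> N x y))"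
  by (simp add: tor_def scaleR_2 algebra_simps)

lemma nij_tor:
  shows "nijenhuis \<nu> N \<longleftrightarrow> (\<forall>x y. tor \<nu> N N x y = 0)"
  unfolding nijenhuis_def tor_diag by (metis (no_types, lifting) eq_iff_diff_eq_0 scaleR_eq_0_iff zero_neq_numeral)



lemma T3:
  assumes "bilinear \<nu>" "linear N" "nijenhuis \<nu> N"
  shows "nijenhuis (br_m \<nu> N) N"
proof -
  have h: "\<And>x y. \<nu> (N x) (N y) = N (\<nu> (N x) y) + N (\<nu> x (N y)) - N (N (\<nu> x y))"
    using assms(2,3) by (simp add: nijenhuis_def br_m_def lin)
  show ?thesis unfolding nijenhuis_def
  proof (intro allI)
    fix x y
    have a: "\<nu> (N (N x)) (N y) = N (\<nu> (N (N x)) y) + N (\<nu> (N x) (N y)) - N (N (\<nu> (N x) y))" by (rule h)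
    have b: "\<nu> (N x) (N (N y)) = N (\<nu> (N x) (N y)) + N (\<nu> x (N (N y))) - N (N (\<nu> x (N y)))" by (rule h)
    have c: "N (\<nu> (N x) (N y)) = N (N (\<nu> (N x) y)) + N (N (\<nu> x (N y))) - N (N (N (\<nu> x y)))"
      using h[of x y] assms(2) by (simp add: lin)
    show "N (br_m (br_m \<nu> N) N x y) = br_m \<nu> N (N x) (N y)"
      unfolding br_m_def using assms(1,2) apply (simp only: bil lin a b)
      by (simp add: c algebra_simps)
  qed
qed

lemma T4:
  assumes "bilinear \<nu>" "linear N" "linear M" "nijenhuis \<nu> N" "\<And>z. M (N z) = N (M z)"
  shows "tor \<nu> N (\<lambda>z. N (M z)) x y = N (tor \<nu> N M x y)"
proof -
  have h: "\<And>x y. \<nu> (N x) (N y) = N (\<nu> (N x) y) + N (\<nu> x (N y)) - N (N (\<nu> x y))"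
    using assms(2,4) by (simp add: nijenhuis_def br_m_def lin)
  have a: "\<nu> (N x) (N (M y)) = N (\<nu> (N x) (M y)) + N (\<nu> x (N (M y))) - N (N (\<nu> x (M y)))" by (rule h)
  have b: "\<nu> (N (M x)) (N y) = N (\<nu> (N (M x)) y) + N (\<nu> (M x) (N y)) - N (N (\<nu> (M x) y))" by (rule h)
  show ?thesis unfolding tor_def br_m_def using assms(1,2,3)
    apply (simp only: bil lin a b assms(5))
    by (simp add: algebra_simps)
qed

lemma linear_pow: fixes n :: "'a::real_vector \<Rightarrow> 'a" assumes "linear n" shows "linear (n ^^ k)"
proof (induction k)
  case 0 show ?case by (simp add: linear_iff)
next
  case (Suc k) show ?case using linear_compose[OF Suc.IH assms] by (simp add: comp_def)
qed

lemma pow_comm: "(n ^^ k) (n z) = n ((n ^^ k) z)"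
  by (simp add: funpow_swap1)

lemma pow_suc_fun: "(\<lambda>z. n ((n ^^ k) z)) = n ^^ Suc k" "(\<lambda>z. (n ^^ k) (n z)) = n ^^ Suc k"
  by (simp_all add: fun_eq_iff funpow_swap1)

lemma tor_id: "bilinear \<nu> \<Longrightarrow> linear N \<Longrightarrow> tor \<nu> N (\<lambda>a. a) x y = 0"
  by (simp add: tor_def br_m_def bil lin algebra_simps)

lemma T4pow:
  assumes "bilinear \<nu>" "linear N" "nijenhuis \<nu> N"
  shows "tor \<nu> N (N ^^ k) x y = 0"
proof (induction k arbitrary: x y)
  case 0 then show ?case using assms tor_id by (simp add: id_def)
next
  case (Suc k)
  have "tor \<nu> N (\<lambda>z. N ((N^^k) z)) x y = N (tor \<nu> N (N^^k) x y)"
    by (rule T4[of \<nu> N "N^^k", OF assms(1,2) linear_pow[OF assms(2)] assms(3) pow_comm])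
  then show ?case unfolding pow_suc_fun(1)[symmetric] using Suc.IH linear_0[OF assms(2)] by simp
qed

lemma T5:
  assumes "bilinear \<nu>" "linear N" "nijenhuis \<nu> N"
  shows "br_m \<nu> (N ^^ Suc k) = br_m (br_m \<nu> (N ^^ k)) N"
proof (intro ext)
  fix x y
  have "br_m (br_m \<nu> (N ^^ k)) N x y = br_m \<nu> (\<lambda>z. (N^^k) (N z)) x y + tor \<nu> (N^^k) N x y"
    by (rule T1[of \<nu> "N^^k" N, OF assms(1) linear_pow[OF assms(2)] assms(2) pow_comm])
  also have "tor \<nu> (N^^k) N x y = 0" using T4pow[OF assms] tor_sym by metis
  finally show "br_m \<nu> (N ^^ Suc k) x y = br_m (br_m \<nu> (N ^^ k)) N x y" unfolding pow_suc_fun(2)[symmetric] by simp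
qed

lemma br_m_id: "br_m \<nu> id = \<nu>" "br_m \<nu> (\<lambda>a. a) = \<nu>" by (simp_all add: br_m_def fun_eq_iff)

lemma T6:
  assumes "bilinear \<nu>" "linear N" "nijenhuis \<nu> N"
  shows "nijenhuis (br_m \<nu> (N ^^ k)) N \<and> bilinear (br_m \<nu> (N ^^ k))"
proof (induction k)
  case 0 then show ?case using assms by (simp add: br_m_id)
next
  case (Suc k)
  then show ?case unfolding T5[OF assms, of k] using T3[of "br_m \<nu> (N ^^ k)" N] br_m_bilinear assms by blast
qed

lemma T7:
  assumes "bilinear \<nu>" "linear N" "nijenhuis \<nu> N"
  shows "br_m (br_m \<nu> (N ^^ a)) (N ^^ b) = br_m \<nu> (N ^^ (a + b))"
proof (induction b)
  case 0 then show ?case by (simp add: br_m_id)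
next
  case (Suc b)
  have "br_m (br_m \<nu> (N ^^ a)) (N ^^ Suc b) = br_m (br_m (br_m \<nu> (N ^^ a)) (N ^^ b)) N"
    using T5[of "br_m \<nu> (N ^^ a)" N b] T6[OF assms, of a] assms by blast
  also have "\<dots> = br_m \<nu> (N ^^ Suc (a + b))" using Suc T5[OF assms, of "a+b"] by simp
  finally show ?case by (simp only: add_Suc_right)
qed

lemma T8:
  assumes "bilinear \<nu>" "linear N" "nijenhuis \<nu> N"
  shows "nijenhuis (br_m \<nu> (N ^^ a)) (N ^^ m)"
proof -
  let ?v = "br_m \<nu> (N ^^ a)"
  have bv: "bilinear ?v" using T6[OF assms] by blast
  have "\<And>x y. tor ?v (N^^m) (N^^m) x y = 0"
  proof -
    fix x y
    have "br_m (br_m ?v (N^^m)) (N^^m) x y = br_m ?v (\<lambda>z. (N^^m) ((N^^m) z)) x y + tor ?v (N^^m) (N^^m) x y"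
      by (rule T1[of ?v "N^^m" "N^^m", OF bv linear_pow[OF assms(2)] linear_pow[OF assms(2)] refl])
    moreover have "(\<lambda>z. (N^^m) ((N^^m) z)) = N ^^ (m + m)" by (simp add: funpow_add fun_eq_iff)
    moreover have "br_m (br_m ?v (N^^m)) (N^^m) = br_m ?v (N ^^ (m + m))"
      using T7[OF assms] by (simp add: add.assoc)
    ultimately show "tor ?v (N^^m) (N^^m) x y = 0" by simp
  qed
  then show ?thesis using nij_tor by blast
qed



lemma L0:
  assumes lb: "lie_bracket \<nu>" and lM: "linear M" and nij: "nijenhuis \<nu> M"
  shows "lie_bracket (br_m \<nu> M)"
proof -
  have bl: "bilinear \<nu>" and sk: "\<And>x y. \<nu> x y = - \<nu> y x"
    and jac: "\<And>x y z. \<nu> x (\<nu> y z) + \<nu> y (\<nu> z x) + \<nu> z (\<nu> x y) = 0"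
    using lb unfolding lie_bracket_def by blast+
  have R: "\<And>a b. \<nu> (M a) (M b) = M (\<nu> (M a) b) + M (\<nu> a (M b)) - M (M (\<nu> a b))"
    using nij lM by (simp add: nijenhuis_def br_m_def lin)
  have s1: "\<And>x y z. br_m \<nu> M x (br_m \<nu> M y z) =
     (\<nu> (M x) (\<nu> (M y) z) + \<nu> (M x) (\<nu> y (M z)) + \<nu> x (\<nu> (M y) (M z)))
     - M ((\<nu> (M x) (\<nu> y z) + \<nu> x (\<nu> (M y) z) + \<nu> x (\<nu> y (M z))) - M (\<nu> x (\<nu> y z)))"
  proof -
    fix x y z
    have e1: "\<nu> (M x) (M (\<nu> y z)) = M (\<nu> (M x) (\<nu> y z)) + M (\<nu> x (M (\<nu> y z))) - M (M (\<nu> x (\<nu> y z)))"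
      by (rule R)
    have e2: "\<nu> x (\<nu> (M y) (M z)) = \<nu> x (M (\<nu> (M y) z)) + \<nu> x (M (\<nu> y (M z))) - \<nu> x (M (M (\<nu> y z)))"
      using R[of y z] bl by (simp add: bil)
    show "?thesis x y z"
      unfolding br_m_def using bl lM
      apply (simp only: bil lin e1 e2)
      by (simp add: algebra_simps)
  qed
  show ?thesis unfolding lie_bracket_def
  proof (intro conjI allI)
    show "bilinear (br_m \<nu> M)" by (rule br_m_bilinear[OF bl lM])
  next
    fix x y
    have a: "\<nu> (M x) y = - \<nu> y (M x)" "\<nu> x (M y) = - \<nu> (M y) x" "\<nu> x y = - \<nu> y x" by (rule sk)+
    show "br_m \<nu> M x y = - br_m \<nu> M y x"
      unfolding br_m_def using lM by (simp only: a lin) (simp add: algebra_simps)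
  next
    fix x y z
    let ?G1 = "(\<nu> (M x) (\<nu> (M y) z) + \<nu> (M x) (\<nu> y (M z)) + \<nu> x (\<nu> (M y) (M z)))
             + (\<nu> (M y) (\<nu> (M z) x) + \<nu> (M y) (\<nu> z (M x)) + \<nu> y (\<nu> (M z) (M x)))
             + (\<nu> (M z) (\<nu> (M x) y) + \<nu> (M z) (\<nu> x (M y)) + \<nu> z (\<nu> (M x) (M y)))"
    let ?G2 = "(\<nu> (M x) (\<nu> y z) + \<nu> x (\<nu> (M y) z) + \<nu> x (\<nu> y (M z)))
             + (\<nu> (M y) (\<nu> z x) + \<nu> y (\<nu> (M z) x) + \<nu> y (\<nu> z (M x)))
             + (\<nu> (M z) (\<nu> x y) + \<nu> z (\<nu> (M x) y) + \<nu> z (\<nu> x (M y)))"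
    let ?J = "\<nu> x (\<nu> y z) + \<nu> y (\<nu> z x) + \<nu> z (\<nu> x y)"
    have g1: "?G1 = (\<nu> (M x) (\<nu> (M y) z) + \<nu> (M y) (\<nu> z (M x)) + \<nu> z (\<nu> (M x) (M y)))
       + (\<nu> (M y) (\<nu> (M z) x) + \<nu> (M z) (\<nu> x (M y)) + \<nu> x (\<nu> (M y) (M z)))
       + (\<nu> (M z) (\<nu> (M x) y) + \<nu> (M x) (\<nu> y (M z)) + \<nu> y (\<nu> (M z) (M x)))"
      by (simp add: algebra_simps)
    have G1: "?G1 = 0" unfolding g1 jac by simp
    have g2: "?G2 = (\<nu> (M x) (\<nu> y z) + \<nu> y (\<nu> z (M x)) + \<nu> z (\<nu> (M x) y))
       + (\<nu> (M y) (\<nu> z x) + \<nu> z (\<nu> x (M y)) + \<nu> x (\<nu> (M y) z))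
       + (\<nu> (M z) (\<nu> x y) + \<nu> x (\<nu> y (M z)) + \<nu> y (\<nu> (M z) x))"
      by (simp add: algebra_simps)
    have G2: "?G2 = 0" unfolding g2 jac by simp
    have J: "?J = 0" by (rule jac)
    have "br_m \<nu> M x (br_m \<nu> M y z) + br_m \<nu> M y (br_m \<nu> M z x) + br_m \<nu> M z (br_m \<nu> M x y)
        = ?G1 - M (?G2 - M ?J)"
      unfolding s1 using lM by (simp add: lin algebra_simps)
    then show "br_m \<nu> M x (br_m \<nu> M y z) + br_m \<nu> M y (br_m \<nu> M z x) + br_m \<nu> M z (br_m \<nu> M x y) = 0"
      using G1 G2 J lM by (simp add: lin)
  qed
qed



lemma nij_affine:
  assumes bl: "bilinear \<nu>" and lM: "linear M" and nij: "nijenhuis \<nu> M"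
  shows "nijenhuis \<nu> (\<lambda>z. a *\<^sub>R z + b *\<^sub>R M z)"
proof -
  have R: "\<And>x y. \<nu> (M x) (M y) = M (\<nu> (M x) y) + M (\<nu> x (M y)) - M (M (\<nu> x y))"
    using nij lM by (simp add: nijenhuis_def br_m_def lin)
  show ?thesis unfolding nijenhuis_def br_m_def using bl lM
    apply (intro allI)
    apply (simp only: bil lin R)
    by (simp add: algebra_simps)
qed

lemma br_m_affine:
  assumes bl: "bilinear \<nu>" and lM: "linear M"
  shows "br_m \<nu> (\<lambda>z. a *\<^sub>R z + b *\<^sub>R M z) x y = a *\<^sub>R \<nu> x y + b *\<^sub>R br_m \<nu> M x y"
  unfolding br_m_def using bl lM by (simp add: bil lin algebra_simps)

lemma compat_le:
  assumes lb: "lie_bracket \<mu>" and lN: "linear N" and nij: "nijenhuis \<mu> N" and le: "i \<le> k"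
  shows "lie_bracket (\<lambda>x y. a *\<^sub>R br_m \<mu> (N ^^ i) x y + b *\<^sub>R br_m \<mu> (N ^^ k) x y)"
proof -
  have bl: "bilinear \<mu>" using lb unfolding lie_bracket_def by blast
  let ?v = "br_m \<mu> (N ^^ i)"
  obtain m where km: "k = i + m" using le le_Suc_ex by blast
  have n0: "nijenhuis \<mu> (N ^^ i)" using T8[OF bl lN nij, of 0 i] by (simp add: br_m_id)
  have lv: "lie_bracket ?v" by (rule L0[OF lb linear_pow[OF lN] n0])
  have bv: "bilinear ?v" using T6[OF bl lN nij] by blast
  have nm: "nijenhuis ?v (N ^^ m)" by (rule T8[OF bl lN nij])
  have "lie_bracket (br_m ?v (\<lambda>z. a *\<^sub>R z + b *\<^sub>R (N ^^ m) z))"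
  proof (rule L0[OF lv])
    have lp: "linear (N ^^ m)" by (rule linear_pow[OF lN])
    show "linear (\<lambda>z. a *\<^sub>R z + b *\<^sub>R (N ^^ m) z)"
      by (rule linearI) (simp_all add: lin[OF lp] algebra_simps)
    show "nijenhuis ?v (\<lambda>z. a *\<^sub>R z + b *\<^sub>R (N ^^ m) z)"
      by (rule nij_affine[OF bv lp nm])
  qed
  moreover have "br_m ?v (\<lambda>z. a *\<^sub>R z + b *\<^sub>R (N ^^ m) z) = (\<lambda>x y. a *\<^sub>R br_m \<mu> (N ^^ i) x y + b *\<^sub>R br_m \<mu> (N ^^ k) x y)"
    using br_m_affine[OF bv linear_pow[OF lN]] T7[OF bl lN nij, of i m] km by (simp add: fun_eq_iff)
  ultimately show ?thesis by simp
qed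

lemma compat:
  assumes lb: "lie_bracket \<mu>" and lN: "linear N" and nij: "nijenhuis \<mu> N"
  shows "lie_bracket (\<lambda>x y. a *\<^sub>R br_m \<mu> (N ^^ i) x y + b *\<^sub>R br_m \<mu> (N ^^ k) x y)"
proof (cases "i \<le> k")
  case True then show ?thesis by (rule compat_le[OF lb lN nij])
next
  case False
  then have "lie_bracket (\<lambda>x y. b *\<^sub>R br_m \<mu> (N ^^ k) x y + a *\<^sub>R br_m \<mu> (N ^^ i) x y)"
    by (intro compat_le[OF lb lN nij]) simp
  then show ?thesis by (simp add: add.commute)
qed

lemma pow_lie:
  assumes lb: "lie_bracket \<mu>" and lN: "linear N" and nij: "nijenhuis \<mu> N"
  shows "lie_bracket (br_m \<mu> (N ^^ i))"
  using compat[OF assms, of 1 i 0 i] by simp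



lemma vec_eq: "(\<And>z. a \<bullet> z = b \<bullet> z) \<Longrightarrow> (a::'a::real_inner) = b"
  using vector_eq_rdot by blast

lemma bil_lin: "bilinear \<nu> \<Longrightarrow> linear (\<nu> x)"
  unfolding bilinear_def by simp

lemma coad_inner:
  fixes \<nu> :: "'a::euclidean_space \<Rightarrow> 'a \<Rightarrow> 'a"
  assumes "bilinear \<nu>" shows "coad \<nu> x e \<bullet> z = - (e \<bullet> \<nu> x z)"
  unfolding coad_def by (simp add: adjoint_clauses[OF bil_lin[OF assms]])

lemma adj_inner:
  fixes M :: "'a::euclidean_space \<Rightarrow> 'a"
  assumes "linear M" shows "adjoint M e \<bullet> z = e \<bullet> M z"
  by (simp add: adjoint_clauses[OF assms])

lemma adj_pow:
  fixes n :: "'a::euclidean_space \<Rightarrow> 'a"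
  assumes ln: "linear n" shows "adjoint (n ^^ j) = adjoint n ^^ j"
proof -
  have "\<And>x y. (n ^^ j) x \<bullet> y = x \<bullet> (adjoint n ^^ j) y"
  proof (induction j)
    case 0 then show ?case by simp
  next
    case (Suc j)
    fix x y
    have "(n ^^ Suc j) x \<bullet> y = n ((n ^^ j) x) \<bullet> y" by simp
    also have "\<dots> = (n ^^ j) x \<bullet> adjoint n y" by (simp add: adjoint_clauses(1)[OF ln])
    also have "\<dots> = x \<bullet> (adjoint n ^^ j) (adjoint n y)" by (rule Suc.IH)
    also have "\<dots> = x \<bullet> (adjoint n ^^ Suc j) y" by (simp add: funpow_swap1)
    finally show "(n ^^ Suc j) x \<bullet> y = x \<bullet> (adjoint n ^^ Suc j) y" .
  qed
  then show ?thesis by (intro adjoint_unique) blast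
qed

lemma Aop_coad:
  fixes \<nu> :: "'a::euclidean_space \<Rightarrow> 'a \<Rightarrow> 'a"
  assumes bl: "bilinear \<nu>" and lm: "linear m"
  shows "A_op \<nu> m (adjoint m) \<xi> = coad (br_m \<nu> m) \<xi>"
proof (rule ext, rule vec_eq)
  fix \<eta> z
  have bb: "bilinear (br_m \<nu> m)" by (rule br_m_bilinear[OF bl lm])
  show "A_op \<nu> m (adjoint m) \<xi> \<eta> \<bullet> z = coad (br_m \<nu> m) \<xi> \<eta> \<bullet> z"
    unfolding A_op_def
    apply (simp only: inner_diff_left inner_add_left adj_inner[OF lm] coad_inner[OF bl] coad_inner[OF bb])
    by (simp only: br_m_def inner_diff_right inner_add_right)
qed

lemma cocycle_m_iff:
  fixes \<nu> :: "'a::euclidean_space \<Rightarrow> 'a \<Rightarrow> 'a"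
  assumes bl: "bilinear \<nu>" and lm: "linear m"
  shows "cocycle_m \<nu> m (adjoint m) D \<longleftrightarrow> cocycle (br_m \<nu> m) D"
  unfolding cocycle_m_def cocycle_def Aop_coad[OF bl lm] ..

definition Cc :: "('a::real_inner \<Rightarrow> 'a \<Rightarrow> 'a) \<Rightarrow> ('a \<Rightarrow> 'a \<Rightarrow> 'a \<Rightarrow> real) \<Rightarrow> 'a \<Rightarrow> 'a \<Rightarrow> 'a \<Rightarrow> 'a \<Rightarrow> real" where
  "Cc \<nu> D x y e1 e2 = iota (coad \<nu> x) (D y) e1 e2 - iota (coad \<nu> y) (D x) e1 e2 - D (\<nu> x y) e1 e2"

lemma cocycle_Cc: "cocycle \<nu> D \<longleftrightarrow> (\<forall>x y e1 e2. Cc \<nu> D x y e1 e2 = 0)"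
  unfolding cocycle_def Cc_def ..

definition W :: "('a::real_inner \<Rightarrow> 'a \<Rightarrow> 'a) \<Rightarrow> ('a \<Rightarrow> 'a \<Rightarrow> 'a \<Rightarrow> real) \<Rightarrow> ('a \<Rightarrow> 'a) \<Rightarrow> 'a \<Rightarrow> 'a \<Rightarrow> 'a \<Rightarrow> 'a \<Rightarrow> real" where
  "W \<nu> D T x y e1 e2 = D y e1 (T (coad \<nu> x e2) - coad \<nu> x (T e2)) - D x e1 (T (coad \<nu> y e2) - coad \<nu> y (T e2))"

lemma coad_br_m:
  fixes \<nu> :: "'a::euclidean_space \<Rightarrow> 'a \<Rightarrow> 'a"
  assumes bl: "bilinear \<nu>" and lm: "linear m"
  shows "coad (br_m \<nu> m) x e = coad \<nu> (m x) e + adjoint m (coad \<nu> x e) - coad \<nu> x (adjoint m e)"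
  using fun_cong[OF Aop_coad[OF bl lm, of x], of e] unfolding A_op_def by (simp add: algebra_simps)

locale eqv =
  fixes D :: "'a::euclidean_space \<Rightarrow> 'a \<Rightarrow> 'a \<Rightarrow> real" and M :: "'a \<Rightarrow> 'a"
  assumes bD: "\<And>\<xi>. bilinear (D \<xi>)"
    and lD: "\<And>e1 e2. linear (\<lambda>\<xi>. D \<xi> e1 e2)"
    and lM: "linear M"
    and E1: "\<And>\<xi> a b. D (M \<xi>) a b = D \<xi> a (adjoint M b)"
    and E2: "\<And>\<xi> a b. D \<xi> (adjoint M a) b = D \<xi> a (adjoint M b)"
begin

lemma DL: "D (a + b) e1 e2 = D a e1 e2 + D b e1 e2" "D (a - b) e1 e2 = D a e1 e2 - D b e1 e2"
  using linear_add[OF lD[of e1 e2], of a b] linear_diff[OF lD[of e1 e2], of a b] by simp_all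

lemmas bD' = bil[OF bD]

lemma CC:
  assumes bl: "bilinear \<nu>"
  shows "Cc \<nu> (\<lambda>\<xi>. D (M \<xi>)) x y e1 e2 - Cc (br_m \<nu> M) D x y e1 e2
     = Cc \<nu> D x y e1 (adjoint M e2) + Cc \<nu> D x y (adjoint M e1) e2 - Cc \<nu> D (M x) y e1 e2 - Cc \<nu> D x (M y) e1 e2"
  unfolding Cc_def iota_def
  by ((simp only: coad_br_m[OF bl lM] br_m_def DL bD' E1 E2) ; (simp add: algebra_simps))

lemma WC:
  assumes bl: "bilinear \<nu>"
  shows "Cc \<nu> (\<lambda>\<xi>. D (M \<xi>)) x y e1 e2 = Cc \<nu> D x y e1 (adjoint M e2) + W \<nu> D (adjoint M) x y e1 e2"
  unfolding Cc_def iota_def W_def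
  by ((simp only: bD' E1 E2) ; (simp add: algebra_simps))

lemma WN:
  assumes bl: "bilinear \<nu>" and nij: "nijenhuis \<nu> M"
  shows "W (br_m \<nu> M) D (adjoint M) x y e1 e2 = W \<nu> D (adjoint M) x y (adjoint M e1) e2"
proof -
  have R: "\<And>a b. \<nu> (M a) (M b) = M (\<nu> (M a) b) + M (\<nu> a (M b)) - M (M (\<nu> a b))"
    using nij lM by (simp add: nijenhuis_def br_m_def lin)
  have bb: "bilinear (br_m \<nu> M)" by (rule br_m_bilinear[OF bl lM])
  have VI: "\<And>x e. adjoint M (coad (br_m \<nu> M) x e) - coad (br_m \<nu> M) x (adjoint M e)
     = adjoint M (adjoint M (coad \<nu> x e) - coad \<nu> x (adjoint M e))"
  proof (rule vec_eq)
    fix x e z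
    have r: "\<nu> (M x) (M z) = M (\<nu> (M x) z) + M (\<nu> x (M z)) - M (M (\<nu> x z))" by (rule R)
    show "(adjoint M (coad (br_m \<nu> M) x e) - coad (br_m \<nu> M) x (adjoint M e)) \<bullet> z
       = adjoint M (adjoint M (coad \<nu> x e) - coad \<nu> x (adjoint M e)) \<bullet> z"
      apply (simp only: inner_diff_left adj_inner[OF lM] coad_inner[OF bl] coad_inner[OF bb])
      apply (simp only: br_m_def r)
      by (simp add: inner_diff_right inner_add_right adj_inner[OF lM] lin[OF lM] algebra_simps)
  qed
  show ?thesis unfolding W_def VI by (simp only: E2)
qed

end



context eqv
begin

lemma step:
  assumes bl: "bilinear \<nu>" and nij: "nijenhuis \<nu> M"
    and c0: "cocycle \<nu> D" and c1: "cocycle (br_m \<nu> M) D"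
  shows "cocycle (br_m (br_m \<nu> M) M) D"
proof -
  let ?v = "br_m \<nu> M"
  have bv: "bilinear ?v" by (rule br_m_bilinear[OF bl lM])
  have nv: "nijenhuis ?v M" by (rule T3[OF bl lM nij])
  have z0: "\<And>x y e1 e2. Cc \<nu> D x y e1 e2 = 0" using c0 unfolding cocycle_Cc by blast
  have z1: "\<And>x y e1 e2. Cc ?v D x y e1 e2 = 0" using c1 unfolding cocycle_Cc by blast
  have w0: "\<And>x y e1 e2. W \<nu> D (adjoint M) x y e1 e2 = 0"
  proof -
    fix x y e1 e2
    have "Cc \<nu> (\<lambda>\<xi>. D (M \<xi>)) x y e1 e2 = 0" using CC[OF bl, of x y e1 e2] z0 z1 by simp
    then show "W \<nu> D (adjoint M) x y e1 e2 = 0" using WC[OF bl, of x y e1 e2] z0 by simp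
  qed
  have w1: "\<And>x y e1 e2. W ?v D (adjoint M) x y e1 e2 = 0"
    using WN[OF bl nij] w0 by simp
  have "\<And>x y e1 e2. Cc (br_m ?v M) D x y e1 e2 = 0"
  proof -
    fix x y e1 e2
    have "Cc ?v (\<lambda>\<xi>. D (M \<xi>)) x y e1 e2 = 0" using WC[OF bv, of x y e1 e2] z1 w1 by simp
    then show "Cc (br_m ?v M) D x y e1 e2 = 0" using CC[OF bv, of x y e1 e2] z1 by simp
  qed
  then show ?thesis unfolding cocycle_Cc by blast
qed

lemma allk:
  assumes bl: "bilinear \<mu>" and nij: "nijenhuis \<mu> M"
    and c0: "cocycle \<mu> D" and c1: "cocycle (br_m \<mu> M) D"
  shows "cocycle (br_m \<mu> (M ^^ k)) D"
proof -
  have "cocycle (br_m \<mu> (M ^^ k)) D \<and> cocycle (br_m \<mu> (M ^^ Suc k)) D"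
  proof (induction k)
    case 0 then show ?case using c0 c1 by (simp add: br_m_id)
  next
    case (Suc k)
    have a: "nijenhuis (br_m \<mu> (M ^^ k)) M \<and> bilinear (br_m \<mu> (M ^^ k))" by (rule T6[OF bl lM nij])
    have "cocycle (br_m (br_m (br_m \<mu> (M ^^ k)) M) M) D"
      using step[of "br_m \<mu> (M ^^ k)"] a Suc.IH unfolding T5[OF bl lM nij, symmetric] by blast
    then have "cocycle (br_m \<mu> (M ^^ Suc (Suc k))) D"
      unfolding T5[OF bl lM nij] .
    then show ?case using Suc.IH by blast
  qed
  then show ?thesis by blast
qed

lemma Cc_comp:
  assumes bl: "bilinear \<nu>" and c0: "cocycle \<nu> D" and c1: "cocycle (br_m \<nu> M) D"
  shows "cocycle \<nu> (\<lambda>\<xi>. D (M \<xi>))"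
proof -
  have z0: "\<And>x y e1 e2. Cc \<nu> D x y e1 e2 = 0" using c0 unfolding cocycle_Cc by blast
  have z1: "\<And>x y e1 e2. Cc (br_m \<nu> M) D x y e1 e2 = 0" using c1 unfolding cocycle_Cc by blast
  show ?thesis unfolding cocycle_Cc using CC[OF bl] z0 z1 by simp
qed

lemma eqv_pow: "eqv D (M ^^ j)"
proof -
  have e1: "\<And>\<xi> a b. D ((M ^^ j) \<xi>) a b = D \<xi> a ((adjoint M ^^ j) b)"
  proof (induction j)
    case 0 then show ?case by simp
  next
    case (Suc j)
    fix \<xi> a b
    have "D ((M ^^ Suc j) \<xi>) a b = D (M ((M ^^ j) \<xi>)) a b" by simp
    also have "\<dots> = D ((M ^^ j) \<xi>) a (adjoint M b)" by (rule E1)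
    also have "\<dots> = D \<xi> a ((adjoint M ^^ j) (adjoint M b))" by (rule Suc.IH)
    also have "\<dots> = D \<xi> a ((adjoint M ^^ Suc j) b)" by (simp add: funpow_swap1)
    finally show "D ((M ^^ Suc j) \<xi>) a b = D \<xi> a ((adjoint M ^^ Suc j) b)" .
  qed
  have e2: "\<And>\<xi> a b. D \<xi> ((adjoint M ^^ j) a) b = D \<xi> a ((adjoint M ^^ j) b)"
  proof (induction j)
    case 0 then show ?case by simp
  next
    case (Suc j)
    fix \<xi> a b
    have "D \<xi> ((adjoint M ^^ Suc j) a) b = D \<xi> (adjoint M ((adjoint M ^^ j) a)) b" by simp
    also have "\<dots> = D \<xi> ((adjoint M ^^ j) a) (adjoint M b)" by (rule E2)
    also have "\<dots> = D \<xi> a ((adjoint M ^^ j) (adjoint M b))" by (rule Suc.IH)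
    also have "\<dots> = D \<xi> a ((adjoint M ^^ Suc j) b)" by (simp add: funpow_swap1)
    finally show "D \<xi> ((adjoint M ^^ Suc j) a) b = D \<xi> a ((adjoint M ^^ Suc j) b)" .
  qed
  show ?thesis
    unfolding eqv_def adj_pow[OF lM] using bD lD linear_pow[OF lM] e1 e2 by blast
qed

end



lemma dual_pair:
  fixes d :: "'a::euclidean_space \<Rightarrow> 'a \<Rightarrow> 'a \<Rightarrow> real"
  assumes ld: "linear (\<lambda>\<xi>. d \<xi> e1 e2)"
  shows "dual_br d e1 e2 \<bullet> \<xi> = d \<xi> e1 e2"
proof -
  have "d \<xi> e1 e2 = (\<lambda>\<xi>. d \<xi> e1 e2) (\<Sum>b\<in>Basis. (\<xi> \<bullet> b) *\<^sub>R b)"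
    by (simp add: euclidean_representation)
  also have "\<dots> = (\<Sum>b\<in>Basis. (\<lambda>\<xi>. d \<xi> e1 e2) ((\<xi> \<bullet> b) *\<^sub>R b))"
    by (rule linear_sum[OF ld])
  also have "\<dots> = (\<Sum>b\<in>Basis. (\<xi> \<bullet> b) * d b e1 e2)"
    using linear_scale[OF ld] by simp
  also have "\<dots> = dual_br d e1 e2 \<bullet> \<xi>"
    unfolding dual_br_def inner_sum_left by (rule sum.cong) (simp_all add: inner_commute)
  finally show ?thesis ..
qed

lemma lie_S:
  assumes lb: "lie_bracket L" and lS: "linear S"
    and c1: "\<And>a b. L a (S b) = S (L a b)" and c2: "\<And>a b. L (S a) b = S (L a b)"
  shows "lie_bracket (\<lambda>a b. S (L a b))"
proof -
  have bl: "bilinear L" and sk: "\<And>x y. L x y = - L y x"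
    and jac: "\<And>x y z. L x (L y z) + L y (L z x) + L z (L x y) = 0"
    using lb unfolding lie_bracket_def by blast+
  show ?thesis unfolding lie_bracket_def
  proof (intro conjI allI)
    show "bilinear (\<lambda>a b. S (L a b))"
      using bl lS unfolding bilinear_def by (auto intro!: linearI simp: bil[OF bl] lin[OF lS])
  next
    fix x y
    show "S (L x y) = - S (L y x)" by (subst sk) (simp add: lin[OF lS])
  next
    fix x y z
    have "S (L x (S (L y z))) + S (L y (S (L z x))) + S (L z (S (L x y)))
        = S (S (L x (L y z) + L y (L z x) + L z (L x y)))"
      by (simp only: c1 lin[OF lS])
    also have "\<dots> = 0" by (simp only: jac lin[OF lS])
    finally show "S (L x (S (L y z))) + S (L y (S (L z x))) + S (L z (S (L x y))) = 0" .
  qed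
qed



theorem mainTheorem13:
  fixes B :: "'a::euclidean_space \<Rightarrow> 'a \<Rightarrow> 'a"
    and d :: "'a \<Rightarrow> 'a \<Rightarrow> 'a \<Rightarrow> real"
    and n :: "'a \<Rightarrow> 'a"
  assumes NL: "almost_NL_bialgebra B d n"
    and Nij: "nijenhuis B n"
    and equiv: "\<And>xi eta1 eta2. d xi eta1 (adjoint n eta2) = d (n xi) eta1 eta2"
  shows "(\<forall>i j::nat.
      lie_bracket (br_m B (n ^^ i))
    \<and> lie_bracket (br_m (dual_br d) (adjoint n ^^ j))
    \<and> (\<forall>eta1 eta2 xi. br_m (dual_br d) (adjoint n ^^ j) eta1 eta2 \<bullet> xi
                        = delta_tw d (adjoint n ^^ j) (n ^^ j) xi eta1 eta2)
    \<and> cocycle_m B (n ^^ i) (adjoint n ^^ i) (delta_tw d (adjoint n ^^ j) (n ^^ j))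
    \<and> lie_bialgebra (br_m B (n ^^ i)) (delta_tw d (adjoint n ^^ j) (n ^^ j)))
    \<and> (\<forall>i k::nat. \<forall>a b::real.
      lie_bracket (\<lambda>x y. a *\<^sub>R br_m B (n ^^ i) x y + b *\<^sub>R br_m B (n ^^ k) x y))
    \<and> (\<forall>j k::nat. \<forall>a b::real.
      lie_bracket (\<lambda>x y. a *\<^sub>R br_m (dual_br d) (adjoint n ^^ j) x y
                        + b *\<^sub>R br_m (dual_br d) (adjoint n ^^ k) x y))"
proof -
  let ?L = "dual_br d"
  let ?T = "adjoint n"
  have lbB: "lie_bracket B" and ld: "\<And>e1 e2. linear (\<lambda>\<xi>. d \<xi> e1 e2)"
    and wd: "\<And>\<xi>. wedge2 (d \<xi>)" and cB: "cocycle B d" and lbL: "lie_bracket ?L"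
    and ln: "linear n" and cBn0: "cocycle_m B n (adjoint n) d"
    using NL unfolding almost_NL_bialgebra_def lie_bialgebra_def by blast+
  have blB: "bilinear B" using lbB unfolding lie_bracket_def by blast
  have bd: "\<And>\<xi>. bilinear (d \<xi>)" and skd: "\<And>\<xi> a b. d \<xi> a b = - d \<xi> b a"
    using wd unfolding wedge2_def by blast+
  have blL: "bilinear ?L" and skL: "\<And>a b. ?L a b = - ?L b a"
    using lbL unfolding lie_bracket_def by blast+
  have lT: "linear ?T" by (rule adjoint_linear[OF ln])
  have lTj: "\<And>j. linear (?T ^^ j)" by (rule linear_pow[OF lT])
  have lnj: "\<And>j. linear (n ^^ j)" by (rule linear_pow[OF ln])
  have adjj: "\<And>j. adjoint (n ^^ j) = ?T ^^ j" by (rule adj_pow[OF ln])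
  have cBn: "cocycle (br_m B n) d" using cBn0 cocycle_m_iff[OF blB ln] by blast
  have E1: "\<And>\<xi> a b. d (n \<xi>) a b = d \<xi> a (?T b)" using equiv by simp
  have E2: "\<And>\<xi> a b. d \<xi> (?T a) b = d \<xi> a (?T b)"
  proof -
    fix \<xi> a b
    have "d \<xi> (?T a) b = - d \<xi> b (?T a)" by (rule skd)
    also have "\<dots> = - d (n \<xi>) b a" by (simp add: E1)
    also have "\<dots> = d (n \<xi>) a b" using skd[of "n \<xi>" b a] by simp
    also have "\<dots> = d \<xi> a (?T b)" by (rule E1)
    finally show "d \<xi> (?T a) b = d \<xi> a (?T b)" .
  qed
  have ev: "eqv d n" unfolding eqv_def using bd ld ln E1 E2 by blast
  interpret e: eqv d n by (rule ev)
  have LT: "\<And>a b. ?L a (?T b) = ?T (?L a b)"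
  proof -
    fix a b
    show "?L a (?T b) = ?T (?L a b)"
    proof (rule vec_eq)
    fix z
    show "?L a (?T b) \<bullet> z = ?T (?L a b) \<bullet> z"
      by (simp add: dual_pair[OF ld] adj_inner[OF ln] equiv)
    qed
  qed
  have TL: "\<And>a b. ?L (?T a) b = ?T (?L a b)"
  proof -
    fix a b
    have "?L (?T a) b = - ?L b (?T a)" by (rule skL)
    also have "\<dots> = - ?T (?L b a)" by (simp add: LT)
    also have "\<dots> = ?T (?L a b)" using skL[of b a] by (simp add: lin[OF lT])
    finally show "?L (?T a) b = ?T (?L a b)" .
  qed
  have LTj: "\<And>j a b. ?L a ((?T ^^ j) b) = (?T ^^ j) (?L a b)"
  proof -
    fix j show "\<And>a b. ?L a ((?T ^^ j) b) = (?T ^^ j) (?L a b)"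
      by (induction j) (simp_all add: LT)
  qed
  have TLj: "\<And>j a b. ?L ((?T ^^ j) a) b = (?T ^^ j) (?L a b)"
  proof -
    fix j show "\<And>a b. ?L ((?T ^^ j) a) b = (?T ^^ j) (?L a b)"
      by (induction j) (simp_all add: TL)
  qed
  have brL: "\<And>j. br_m ?L (?T ^^ j) = (\<lambda>a b. (?T ^^ j) (?L a b))"
    by (simp add: fun_eq_iff br_m_def LTj TLj)
  have lieLj: "\<And>j. lie_bracket (br_m ?L (?T ^^ j))"
  proof -
    fix j
    show "lie_bracket (br_m ?L (?T ^^ j))"
      unfolding brL by (rule lie_S[OF lbL lTj[of j] LTj[where j=j] TLj[where j=j]])
  qed
  have dtw: "\<And>j. delta_tw d (?T ^^ j) (n ^^ j) = (\<lambda>\<xi>. d ((n ^^ j) \<xi>))"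
  proof -
    fix j
    interpret ej: eqv d "n ^^ j" by (rule e.eqv_pow)
    show "delta_tw d (?T ^^ j) (n ^^ j) = (\<lambda>\<xi>. d ((n ^^ j) \<xi>))"
      unfolding fun_eq_iff delta_tw_def iota_def
      using ej.E1 ej.E2 unfolding adjj by simp
  qed
  have cocB: "\<And>k. cocycle (br_m B (n ^^ k)) d" by (rule e.allk[OF blB Nij cB cBn])
  have cocij: "\<And>i j. cocycle (br_m B (n ^^ i)) (\<lambda>\<xi>. d ((n ^^ j) \<xi>))"
  proof -
    fix i j
    interpret ej: eqv d "n ^^ j" by (rule e.eqv_pow)
    have bi: "bilinear (br_m B (n ^^ i))" using T6[OF blB ln Nij] by blast
    show "cocycle (br_m B (n ^^ i)) (\<lambda>\<xi>. d ((n ^^ j) \<xi>))"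
      by (rule ej.Cc_comp[OF bi cocB]) (simp add: T7[OF blB ln Nij] cocB)
  qed
  have lieB: "\<And>i. lie_bracket (br_m B (n ^^ i))" by (rule pow_lie[OF lbB ln Nij])
  have dualj: "\<And>j. dual_br (\<lambda>\<xi>. d ((n ^^ j) \<xi>)) = (\<lambda>a b. (?T ^^ j) (?L a b))"
  proof -
    fix j
    have l: "\<And>e1 e2. linear (\<lambda>\<xi>. d ((n ^^ j) \<xi>) e1 e2)"
      using linear_compose[OF lnj ld] by (simp add: comp_def)
    show "dual_br (\<lambda>\<xi>. d ((n ^^ j) \<xi>)) = (\<lambda>a b. (?T ^^ j) (?L a b))"
    proof (rule ext, rule ext, rule vec_eq)
      fix a b z
      show "dual_br (\<lambda>\<xi>. d ((n ^^ j) \<xi>)) a b \<bullet> z = (?T ^^ j) (?L a b) \<bullet> z"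
        by (simp add: dual_pair[OF l] dual_pair[OF ld] adj_inner[OF lnj] flip: adjj)
    qed
  qed
  show ?thesis
  proof (intro conjI allI)
    fix i j :: nat
    show "lie_bracket (br_m B (n ^^ i))" by (rule lieB)
    show "lie_bracket (br_m ?L (?T ^^ j))" by (rule lieLj)
    show "\<And>eta1 eta2 xi. br_m ?L (?T ^^ j) eta1 eta2 \<bullet> xi = delta_tw d (?T ^^ j) (n ^^ j) xi eta1 eta2"
      unfolding dtw brL by (simp add: dual_pair[OF ld] adj_inner[OF lnj] flip: adjj)
    show "cocycle_m B (n ^^ i) (?T ^^ i) (delta_tw d (?T ^^ j) (n ^^ j))"
      unfolding adjj[of i, symmetric] cocycle_m_iff[OF blB lnj] dtw by (rule cocij)
    show "lie_bialgebra (br_m B (n ^^ i)) (delta_tw d (?T ^^ j) (n ^^ j))"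
      unfolding dtw lie_bialgebra_def
    proof (intro conjI allI)
      show "lie_bracket (br_m B (n ^^ i))" by (rule lieB)
      fix e1 e2
      show "linear (\<lambda>\<xi>. d ((n ^^ j) \<xi>) e1 e2)"
        using linear_compose[OF lnj ld] by (simp add: comp_def)
    next
      fix \<xi>
      show "wedge2 (d ((n ^^ j) \<xi>))" by (rule wd)
    next
      show "cocycle (br_m B (n ^^ i)) (\<lambda>\<xi>. d ((n ^^ j) \<xi>))" by (rule cocij)
    next
      show "lie_bracket (dual_br (\<lambda>\<xi>. d ((n ^^ j) \<xi>)))"
        unfolding dualj by (rule lie_S[OF lbL lTj[of j] LTj[where j=j] TLj[where j=j]])
    qed
  next
    fix i k :: nat and a b :: real
    show "lie_bracket (\<lambda>x y. a *\<^sub>R br_m B (n ^^ i) x y + b *\<^sub>R br_m B (n ^^ k) x y)"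
      by (rule compat[OF lbB ln Nij])
  next
    fix j k :: nat and a b :: real
    let ?S = "\<lambda>z. a *\<^sub>R (?T ^^ j) z + b *\<^sub>R (?T ^^ k) z"
    have lS: "linear ?S"
      by (rule linearI) (simp_all add: lin[OF lTj] algebra_simps)
    have "lie_bracket (\<lambda>x y. ?S (?L x y))"
      by (rule lie_S[OF lbL lS]) (simp_all add: bil[OF blL] LTj TLj)
    then show "lie_bracket (\<lambda>x y. a *\<^sub>R br_m ?L (?T ^^ j) x y + b *\<^sub>R br_m ?L (?T ^^ k) x y)"
      unfolding brL .
  qed
qed


end
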